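(* Let $T$ be the rooted infinite tree in which the root is at level $0$ and every vertex at level $n$ has exactly $2^n$ children (at level $n+1$). Then the random basic walk on $T$ is transient with positive probability: the probability that it escapes to infinity (visits infinitely many vertices, each finitely often) is strictly greater than $0$.
   Context: Each undirected edge $\{v,w\}$ is regarded as two arcs $v\to w$ and $w\to v$. A labeling assigns, at each vertex $v$ of degree $\deg(v)$, the port numbers $1,\dots,\deg(v)$ bijectively to the arcs leaving $v$ (labels on $v\to w$ and $w\to v$ need not agree). In a random labeling these bijections are chosen uniformly at random, independently for different vertices. Given a labeling, a starting vertex $v_0$ and an initial port $\ell$, the basic walk leaves $v_0$ along the arc labeled $\ell$; thereafter, whenever it enters a vertex $v$ along an arc whose label is $i$, it leaves $v$ along the arc out of $v$ labeled $(i \bmod \deg(v))+1$. The random basic walk is the basic walk for a random labeling. *)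

theory Defs
  imports "HOL-Probability.Probability"
begin

text \<open>The tree T: a vertex at level n is a list [c_0,...,c_(n-1)] of naturals with
  c_i < 2^i (the child index chosen at level i).\<close>

definition T_vertices :: "nat list set" where
  "T_vertices = {xs. \<forall>i < length xs. xs ! i < 2 ^ i}"

definition T_nbrs :: "nat list \<Rightarrow> nat list set" where
  "T_nbrs v = {v @ [c] | c. c < 2 ^ length v} \<union> (if v = [] then {} else {butlast v})"

definition T_deg :: "nat list \<Rightarrow> nat" where
  "T_deg v = card (T_nbrs v)"

text \<open>Port labelings at a single vertex v: bijections from the arcs leaving v
  (identified with their heads) onto {1..deg v}; extended by 0 off the neighbourhood.\<close>

definition local_labelings :: "nat list \<Rightarrow> (nat list \<Rightarrow> nat) set" where
  "local_labelings v =
     {f. bij_betw f (T_nbrs v) {1..T_deg v} \<and> (\<forall>w. w \<notin> T_nbrs v \<longrightarrow> f w = 0)}"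

text \<open>A labeling L: L v w is the port number of the arc v \<rightarrow> w at v.
  Random labeling: independent uniform choices at all vertices (infinite product measure).\<close>

definition random_labeling :: "(nat list \<Rightarrow> nat list \<Rightarrow> nat) measure" where
  "random_labeling = (\<Pi>\<^sub>M v\<in>T_vertices. uniform_count_measure (local_labelings v))"

definition port_nbr :: "(nat list \<Rightarrow> nat list \<Rightarrow> nat) \<Rightarrow> nat list \<Rightarrow> nat \<Rightarrow> nat list" where
  "port_nbr L v i = (THE w. w \<in> T_nbrs v \<and> L v w = i)"

text \<open>The n-th arc traversed by the basic walk (as a pair (tail, head)).
  Entering v along the arc u \<rightarrow> v whose label is i = L u v, the walk leaves v along
  the arc labeled (i mod deg v) + 1.\<close>

fun basic_arc :: "(nat list \<Rightarrow> nat list \<Rightarrow> nat) \<Rightarrow> nat list \<Rightarrow> nat \<Rightarrow> nat \<Rightarrow> nat list \<times> nat list" where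
  "basic_arc L v0 l 0 = (v0, port_nbr L v0 l)"
| "basic_arc L v0 l (Suc n) =
     (let (u, v) = basic_arc L v0 l n
      in (v, port_nbr L v ((L u v mod T_deg v) + 1)))"

definition basic_walk :: "(nat list \<Rightarrow> nat list \<Rightarrow> nat) \<Rightarrow> nat list \<Rightarrow> nat \<Rightarrow> nat \<Rightarrow> nat list" where
  "basic_walk L v0 l n = (if n = 0 then v0 else snd (basic_arc L v0 l (n - 1)))"

definition escapes :: "(nat \<Rightarrow> nat list) \<Rightarrow> bool" where
  "escapes X \<longleftrightarrow> infinite (range X) \<and> (\<forall>v. finite {n. X n = v})"

end

theory Submission
  imports Defs
begin

lemma T_nbrs_eq: "T_nbrs v = (\<lambda>c. v @ [c]) ` {..<2 ^ length v} \<union> (if v = [] then {} else {butlast v})"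
  unfolding T_nbrs_def by auto

lemma finite_T_nbrs[simp]: "finite (T_nbrs v)"
  unfolding T_nbrs_eq by auto

lemma T_deg_eq: "T_deg v = 2 ^ length v + (if v = [] then 0 else 1)"
proof -
  have "card ((\<lambda>c. v @ [c]) ` {..<2 ^ length v}) = 2 ^ length v"
    by (subst card_image) (auto simp: inj_on_def)
  moreover have "butlast v \<notin> (\<lambda>c. v @ [c]) ` {..<2 ^ length v}" if "v \<noteq> []"
    using that by (auto dest: arg_cong[where f=length])
  ultimately show ?thesis unfolding T_deg_def T_nbrs_eq
    by (auto simp: card_insert_if)
qed

lemma T_deg_pos: "T_deg v > 0"
  by (simp add: T_deg_eq)

lemma finite_local[simp]: "finite (local_labelings v)"
proof -
  have "local_labelings v \<subseteq> {f. \<forall>x. (x \<in> T_nbrs v \<longrightarrow> f x \<in> {1..T_deg v}) \<and> (x \<notin> T_nbrs v \<longrightarrow> f x = 0)}"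
    unfolding local_labelings_def by (auto dest: bij_betwE)
  then show ?thesis by (rule finite_subset) (intro finite_set_of_finite_funs; simp)
qed

lemma local_ne: "local_labelings v \<noteq> {}"
proof -
  have "card (T_nbrs v) = card {1..T_deg v}" by (simp add: T_deg_def)
  then obtain h where h: "bij_betw h (T_nbrs v) {1..T_deg v}"
    using finite_same_card_bij by (metis finite_T_nbrs finite_atLeastAtMost)
  define f where "f x = (if x \<in> T_nbrs v then h x else 0)" for x
  have "bij_betw f (T_nbrs v) {1..T_deg v}"
    using h by (rule bij_betw_cong[THEN iffD1, rotated]) (simp add: f_def)
  then have "f \<in> local_labelings v" unfolding local_labelings_def f_def by auto
  then show ?thesis by auto
qed

interpretation RL: product_prob_space "\<lambda>v. uniform_count_measure (local_labelings v)" T_vertices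
proof -
  have "prob_space (uniform_count_measure (local_labelings v))" for v
    by (rule prob_space_uniform_count_measure) (auto simp: local_ne)
  then show "product_prob_space (\<lambda>v. uniform_count_measure (local_labelings v))"
    by (simp add: product_prob_space_def product_sigma_finite_def product_prob_space_axioms_def
        prob_space_imp_sigma_finite)
qed

lemma RL_eq: "random_labeling = (\<Pi>\<^sub>M v\<in>T_vertices. uniform_count_measure (local_labelings v))"
  by (simp add: random_labeling_def)

lemma prob_RL: "prob_space random_labeling"
  unfolding RL_eq by (rule RL.P.prob_space_axioms)

lemma space_RL: "space random_labeling = (\<Pi>\<^sub>E v\<in>T_vertices. local_labelings v)"
  unfolding RL_eq by (simp add: space_PiM space_uniform_count_measure)

lemma port_nbr_eq:
  assumes "L \<in> space random_labeling" "v \<in> T_vertices" "w \<in> T_nbrs v" "L v w = i"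
  shows "port_nbr L v i = w"
proof -
  have "L v \<in> local_labelings v" using assms(1,2) by (auto simp: space_RL)
  then have inj: "inj_on (L v) (T_nbrs v)" unfolding local_labelings_def bij_betw_def by auto
  show ?thesis unfolding port_nbr_def
    using assms(3,4) inj by (auto intro!: the_equality dest: inj_onD)
qed

definition sw :: "nat \<Rightarrow> nat \<Rightarrow> nat \<Rightarrow> nat" where
  "sw a b x = (if x = a then b else if x = b then a else x)"

lemma sw_sw[simp]: "sw a b (sw a b x) = x" by (simp add: sw_def)

lemma bij_sw: "a \<in> S \<Longrightarrow> b \<in> S \<Longrightarrow> bij_betw (sw a b) S S"
  by (rule bij_betwI[where g="sw a b"]) (auto simp: sw_def)

lemma fiber_card_eq:
  assumes w: "w \<in> T_nbrs v" and i: "i \<in> {1..T_deg v}" and j: "j \<in> {1..T_deg v}"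
  shows "card {f \<in> local_labelings v. f w = i} \<le> card {f \<in> local_labelings v. f w = j}"
proof -
  have sub: "(\<lambda>f. sw i j \<circ> f) ` {f \<in> local_labelings v. f w = i} \<subseteq> {f \<in> local_labelings v. f w = j}"
  proof (rule image_subsetI)
    fix f assume "f \<in> {f \<in> local_labelings v. f w = i}"
    then have f: "f \<in> local_labelings v" "f w = i" by auto
    have "bij_betw (sw i j \<circ> f) (T_nbrs v) {1..T_deg v}"
      using f(1) i j unfolding local_labelings_def
      by (intro bij_betw_trans[where B="{1..T_deg v}"] bij_sw) auto
    moreover have "\<forall>x. x \<notin> T_nbrs v \<longrightarrow> (sw i j \<circ> f) x = 0"
      using f(1) i j unfolding local_labelings_def by (auto simp: sw_def)
    ultimately show "sw i j \<circ> f \<in> {f \<in> local_labelings v. f w = j}"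
      using f(2) unfolding local_labelings_def by (auto simp: sw_def)
  qed
  have inj: "inj_on (\<lambda>f. sw i j \<circ> f) (X :: (nat list \<Rightarrow> nat) set)" for X
  proof (rule inj_onI)
    fix f g :: "nat list \<Rightarrow> nat"
    assume "sw i j \<circ> f = sw i j \<circ> g"
    then have "sw i j (f x) = sw i j (g x)" for x by (metis comp_apply)
    then have "f x = g x" for x by (metis sw_sw)
    then show "f = g" by (rule ext)
  qed
  have fin: "finite {f \<in> local_labelings v. f w = j}" by simp
  show ?thesis by (rule card_inj_on_le[OF inj sub fin])
qed

lemma fiber_card:
  assumes w: "w \<in> T_nbrs v" and i: "i \<in> {1..T_deg v}"
  shows "card {f \<in> local_labelings v. f w = i} * T_deg v = card (local_labelings v)"
proof -
  let ?F = "\<lambda>j. {f \<in> local_labelings v. f w = j}"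
  have eq: "card (?F j) = card (?F i)" if "j \<in> {1..T_deg v}" for j
    using fiber_card_eq[OF w i that] fiber_card_eq[OF w that i] by simp
  have "local_labelings v = (\<Union>j\<in>{1..T_deg v}. ?F j)"
    using w unfolding local_labelings_def by (auto dest: bij_betwE)
  moreover have "card (\<Union>j\<in>{1..T_deg v}. ?F j) = (\<Sum>j\<in>{1..T_deg v}. card (?F j))"
    by (rule card_UN_disjoint) auto
  ultimately have "card (local_labelings v) = (\<Sum>j\<in>{1..T_deg v}. card (?F j))" by simp
  also have "\<dots> = T_deg v * card (?F i)" using eq by simp
  finally show ?thesis by simp
qed

lemma emeasure_fiber:
  assumes w: "w \<in> T_nbrs v" and i: "i \<in> {1..T_deg v}"
  shows "emeasure (uniform_count_measure (local_labelings v)) {f \<in> local_labelings v. f w = i}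
     = ennreal (1 / T_deg v)"
proof -
  have c: "card (local_labelings v) > 0" using local_ne by (simp add: card_gt_0_iff)
  have e1: "emeasure (uniform_count_measure (local_labelings v)) {f \<in> local_labelings v. f w = i}
     = ennreal (real (card {f \<in> local_labelings v. f w = i}) / real (card (local_labelings v)))"
    by (subst emeasure_uniform_count_measure) auto
  have "real (card {f \<in> local_labelings v. f w = i}) * real (T_deg v) = real (card (local_labelings v))"
    by (simp only: of_nat_mult[symmetric] fiber_card[OF w i])
  moreover have gen: "a / b = 1 / d" if "a * d = b" "d > 0" "b > 0" for a b d :: real
    using that by (auto simp: field_simps)
  ultimately have e3: "real (card {f \<in> local_labelings v. f w = i}) / real (card (local_labelings v)) = 1 / T_deg v"
    using T_deg_pos[of v] c by (intro gen) auto
  show ?thesis using e1 e3 by simp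
qed

abbreviation "ML \<equiv> \<lambda>v. uniform_count_measure (local_labelings v)"

definition Paths :: "nat \<Rightarrow> nat \<Rightarrow> nat list set" where
  "Paths m K = {cs. length cs = K \<and> (\<forall>j<K. cs ! j < 2 ^ (m + j))}"

primrec lab :: "nat list \<Rightarrow> nat \<Rightarrow> nat list \<Rightarrow> nat \<Rightarrow> nat" where
  "lab v0 l cs 0 = l"
| "lab v0 l cs (Suc j) = lab v0 l cs j mod T_deg (v0 @ take (Suc j) cs) + 1"

definition Jset :: "nat list \<Rightarrow> nat list \<Rightarrow> nat list set" where
  "Jset v0 cs = (\<lambda>j. v0 @ take j cs) ` {..<length cs}"

definition Xs :: "nat list \<Rightarrow> nat \<Rightarrow> nat list \<Rightarrow> nat list \<Rightarrow> (nat list \<Rightarrow> nat) set" where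
  "Xs v0 l cs w = {f \<in> local_labelings w.
      f (v0 @ take (Suc (length w - length v0)) cs) = lab v0 l cs (length w - length v0)}"

definition Cyl :: "nat list \<Rightarrow> nat \<Rightarrow> nat list \<Rightarrow> (nat list \<Rightarrow> nat list \<Rightarrow> nat) set" where
  "Cyl v0 l cs = prod_emb T_vertices ML (Jset v0 cs) (\<Pi>\<^sub>E w\<in>Jset v0 cs. Xs v0 l cs w)"

lemma path_vert:
  assumes "v0 \<in> T_vertices" "cs \<in> Paths (length v0) K" "j \<le> K"
  shows "v0 @ take j cs \<in> T_vertices"
  unfolding T_vertices_def
proof safe
  fix i assume i: "i < length (v0 @ take j cs)"
  show "(v0 @ take j cs) ! i < 2 ^ i"
  proof (cases "i < length v0")
    case True then show ?thesis using assms(1) by (simp add: nth_append T_vertices_def)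
  next
    case False
    then have "i - length v0 < K" "i - length v0 < j" using i assms by (auto simp: Paths_def)
    then show ?thesis using False assms(2) by (auto simp: nth_append Paths_def)
  qed
qed

lemma path_nbr:
  assumes "cs \<in> Paths (length v0) K" "j < K"
  shows "v0 @ take (Suc j) cs \<in> T_nbrs (v0 @ take j cs)"
proof -
  have "take (Suc j) cs = take j cs @ [cs ! j]" using assms by (simp add: Paths_def take_Suc_conv_app_nth)
  moreover have "cs ! j < 2 ^ length (v0 @ take j cs)" using assms by (auto simp: Paths_def)
  ultimately show ?thesis unfolding T_nbrs_def by auto
qed

lemma mem_Cyl:
  assumes "cs \<in> Paths (length v0) K" and v0: "v0 \<in> T_vertices"
  shows "L \<in> Cyl v0 l cs \<longleftrightarrow> L \<in> space random_labeling \<and>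
    (\<forall>j<K. L (v0 @ take j cs) (v0 @ take (Suc j) cs) = lab v0 l cs j)"
proof -
  have K: "length cs = K" using assms by (simp add: Paths_def)
  have sp: "space random_labeling = (\<Pi>\<^sub>E v\<in>T_vertices. space (ML v))"
    unfolding RL_eq by (simp add: space_PiM)
  have "L \<in> Cyl v0 l cs \<longleftrightarrow> L \<in> space random_labeling \<and> (\<forall>w\<in>Jset v0 cs. L w \<in> Xs v0 l cs w)"
    unfolding Cyl_def prod_emb_def sp by (auto simp: PiE_iff)
  also have "\<dots> \<longleftrightarrow> L \<in> space random_labeling \<and>
    (\<forall>j<K. L (v0 @ take j cs) (v0 @ take (Suc j) cs) = lab v0 l cs j)"
    unfolding Jset_def Xs_def using K
    using path_vert[OF v0 assms(1)]
    by (auto simp: space_RL PiE_iff min_def)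
  finally show ?thesis .
qed

lemma walk_Cyl:
  assumes v0: "v0 \<in> T_vertices" and cs: "cs \<in> Paths (length v0) K" and L: "L \<in> Cyl v0 l cs"
  shows "j < K \<Longrightarrow> basic_arc L v0 l j = (v0 @ take j cs, v0 @ take (Suc j) cs)"
proof (induction j)
  have Ls: "L \<in> space random_labeling" and Lc: "\<And>j. j < K \<Longrightarrow>
      L (v0 @ take j cs) (v0 @ take (Suc j) cs) = lab v0 l cs j"
    using L mem_Cyl[OF cs v0] by auto
  {
    case 0
    have "port_nbr L v0 l = v0 @ take (Suc 0) cs"
      using port_nbr_eq[OF Ls v0 path_nbr[OF cs 0, simplified] Lc[OF 0, simplified]] by simp
    then show ?case by simp
  next
    case (Suc j)
    then have IH: "basic_arc L v0 l j = (v0 @ take j cs, v0 @ take (Suc j) cs)" by simp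
    have "L (v0 @ take j cs) (v0 @ take (Suc j) cs) mod T_deg (v0 @ take (Suc j) cs) + 1
        = lab v0 l cs (Suc j)"
      using Lc[of j] Suc.prems by simp
    moreover have "port_nbr L (v0 @ take (Suc j) cs) (lab v0 l cs (Suc j)) = v0 @ take (Suc (Suc j)) cs"
      using port_nbr_eq[OF Ls path_vert[OF v0 cs] path_nbr[OF cs Suc.prems] Lc[OF Suc.prems]] Suc.prems
      by simp
    ultimately show ?case using IH by simp
  }
qed

lemma lab_range:
  assumes "l \<in> {1..T_deg v0}"
  shows "lab v0 l cs j \<in> {1..T_deg (v0 @ take j cs)}"
proof (cases j)
  case 0 then show ?thesis using assms by simp
next
  case (Suc k)
  have "T_deg (v0 @ take (Suc k) cs) > 0" by (rule T_deg_pos)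
  then show ?thesis using Suc by (simp add: Suc_le_eq)
qed

definition Dg :: "nat \<Rightarrow> nat" where "Dg n = 2 ^ n + (if n = 0 then 0 else 1)"

lemma T_deg_Dg: "T_deg v = Dg (length v)"
  by (simp add: T_deg_eq Dg_def)

lemma Jset_sub: "v0 \<in> T_vertices \<Longrightarrow> cs \<in> Paths (length v0) K \<Longrightarrow> Jset v0 cs \<subseteq> T_vertices"
  unfolding Jset_def using path_vert by (fastforce simp: Paths_def)

lemma path_vert':
  "v0 \<in> T_vertices \<Longrightarrow> cs \<in> Paths (length v0) K \<Longrightarrow> j < length cs \<Longrightarrow> v0 @ take j cs \<in> T_vertices"
  by (rule path_vert) (auto simp: Paths_def)

lemma Xs_sets: "Xs v0 l cs w \<in> sets (ML w)"
  by (auto simp: Xs_def sets_uniform_count_measure)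

lemma Cyl_sets:
  assumes "v0 \<in> T_vertices" "cs \<in> Paths (length v0) K"
  shows "Cyl v0 l cs \<in> sets random_labeling"
  unfolding Cyl_def RL_eq
  by (rule sets_PiM_I) (auto simp: Jset_def Xs_sets intro: path_vert'[OF assms])

lemma measure_Cyl:
  assumes v0: "v0 \<in> T_vertices" and cs: "cs \<in> Paths (length v0) K" and l: "l \<in> {1..T_deg v0}"
  shows "measure random_labeling (Cyl v0 l cs) = (\<Prod>j<K. 1 / Dg (length v0 + j))"
proof -
  have K: "length cs = K" using cs by (simp add: Paths_def)
  have inj: "inj_on (\<lambda>j. v0 @ take j cs) {..<K}"
    by (rule inj_onI) (use K in \<open>auto dest!: arg_cong[where f=length]\<close>)
  have "emeasure random_labeling (Cyl v0 l cs) = (\<Prod>w\<in>Jset v0 cs. emeasure (ML w) (Xs v0 l cs w))"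
    unfolding Cyl_def RL_eq
    by (rule RL.emeasure_PiM_emb) (auto simp: Xs_sets Jset_def intro: path_vert'[OF v0 cs])
  also have "\<dots> = (\<Prod>j<K. emeasure (ML (v0 @ take j cs)) (Xs v0 l cs (v0 @ take j cs)))"
    unfolding Jset_def K by (rule prod.reindex[OF inj, unfolded comp_def])
  also have "\<dots> = (\<Prod>j<K. ennreal (1 / Dg (length v0 + j)))"
  proof (rule prod.cong[OF refl])
    fix j assume j: "j \<in> {..<K}"
    have len: "length (v0 @ take j cs) - length v0 = j" using j K by simp
    have "Xs v0 l cs (v0 @ take j cs) = {f \<in> local_labelings (v0 @ take j cs).
        f (v0 @ take (Suc j) cs) = lab v0 l cs j}"
      unfolding Xs_def len ..
    then show "emeasure (ML (v0 @ take j cs)) (Xs v0 l cs (v0 @ take j cs)) = ennreal (1 / Dg (length v0 + j))"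
      using emeasure_fiber[OF path_nbr[OF cs] lab_range[OF l]] j K
      by (simp add: T_deg_Dg min_def)
  qed
  also have "\<dots> = ennreal (\<Prod>j<K. 1 / Dg (length v0 + j))"
    by (rule prod_ennreal) simp
  finally show ?thesis by (simp add: measure_def prod_nonneg)
qed

lemma Paths_0: "Paths m 0 = {[]}" by (auto simp: Paths_def)

lemma Paths_Suc: "Paths m (Suc K) = (\<lambda>(cs, c). cs @ [c]) ` (Paths m K \<times> {..<2 ^ (m + K)})"
proof safe
  fix cs' assume cs': "cs' \<in> Paths m (Suc K)"
  then have len: "length cs' = Suc K" by (simp add: Paths_def)
  then have eq: "cs' = butlast cs' @ [last cs']"
    by (metis append_butlast_last_id list.size(3) nat.distinct(1))
  have "butlast cs' \<in> Paths m K"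
    using cs' len by (auto simp: Paths_def nth_butlast)
  moreover have "last cs' < 2 ^ (m + K)"
  proof -
    have "cs' \<noteq> []" using len by auto
    then have "last cs' = cs' ! K" using len by (simp add: last_conv_nth)
    then show ?thesis using cs' len by (auto simp: Paths_def)
  qed
  ultimately show "cs' \<in> (\<lambda>(cs, c). cs @ [c]) ` (Paths m K \<times> {..<2 ^ (m + K)})"
    using eq by (auto intro!: image_eqI[where x="(butlast cs', last cs')"])
next
  fix cs and c :: nat assume "cs \<in> Paths m K" "c < 2 ^ (m + K)"
  then show "cs @ [c] \<in> Paths m (Suc K)"
    by (auto simp: Paths_def nth_append less_Suc_eq)
qed

lemma Paths_finite_card: "finite (Paths m K) \<and> card (Paths m K) = (\<Prod>j<K. 2 ^ (m + j))"
proof (induction K)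
  case 0 then show ?case by (simp add: Paths_0)
next
  case (Suc K)
  have inj: "inj_on (\<lambda>(cs, c). cs @ [c]) (Paths m K \<times> {..<2 ^ (m + K)})"
    by (rule inj_onI) auto
  show ?case unfolding Paths_Suc using Suc
    by (simp add: card_image[OF inj] card_cartesian_product)
qed

definition Ev :: "nat list \<Rightarrow> nat \<Rightarrow> nat \<Rightarrow> (nat list \<Rightarrow> nat list \<Rightarrow> nat) set" where
  "Ev v0 l K = (\<Union>cs\<in>Paths (length v0) K. Cyl v0 l cs)"

lemma Cyl_disj:
  assumes v0: "v0 \<in> T_vertices" and cs: "cs \<in> Paths (length v0) K" and cs': "cs' \<in> Paths (length v0) K"
    and ne: "cs \<noteq> cs'"
  shows "Cyl v0 l cs \<inter> Cyl v0 l cs' = {}"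
proof (rule ccontr)
  assume "Cyl v0 l cs \<inter> Cyl v0 l cs' \<noteq> {}"
  then obtain L where L: "L \<in> Cyl v0 l cs" "L \<in> Cyl v0 l cs'" by auto
  have lens: "length cs = K" "length cs' = K" using cs cs' by (auto simp: Paths_def)
  show False
  proof (cases K)
    case 0 then show False using lens ne by simp
  next
    case (Suc k)
    have "basic_arc L v0 l k = (v0 @ take k cs, v0 @ take (Suc k) cs)"
      using walk_Cyl[OF v0 cs L(1)] Suc by simp
    moreover have "basic_arc L v0 l k = (v0 @ take k cs', v0 @ take (Suc k) cs')"
      using walk_Cyl[OF v0 cs' L(2)] Suc by simp
    ultimately have "take (Suc k) cs = take (Suc k) cs'" by simp
    then show False using lens Suc ne by simp
  qed
qed

lemma Ev_sets: "v0 \<in> T_vertices \<Longrightarrow> Ev v0 l K \<in> sets random_labeling"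
  unfolding Ev_def using Paths_finite_card[of "length v0" K]
  by (intro sets.finite_UN) (auto intro: Cyl_sets)

lemma measure_Ev:
  assumes v0: "v0 \<in> T_vertices" and l: "l \<in> {1..T_deg v0}"
  shows "measure random_labeling (Ev v0 l K) = (\<Prod>j<K. 2 ^ (length v0 + j) / Dg (length v0 + j))"
proof -
  let ?m = "length v0"
  interpret P: prob_space random_labeling by (rule prob_RL)
  have "measure random_labeling (Ev v0 l K) = (\<Sum>cs\<in>Paths ?m K. measure random_labeling (Cyl v0 l cs))"
    unfolding Ev_def
  proof (rule measure_finite_Union)
    show "finite (Paths ?m K)" using Paths_finite_card by blast
    show "Cyl v0 l ` Paths ?m K \<subseteq> sets random_labeling" using Cyl_sets[OF v0] by blast
    show "disjoint_family_on (Cyl v0 l) (Paths ?m K)"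
      unfolding disjoint_family_on_def using Cyl_disj[OF v0] by blast
    show "emeasure random_labeling (Cyl v0 l cs) \<noteq> \<infinity>" for cs
      by simp
  qed
  also have "\<dots> = (\<Sum>cs\<in>Paths ?m K. (\<Prod>j<K. 1 / Dg (?m + j)))"
    using measure_Cyl[OF v0 _ l] by simp
  also have "\<dots> = real (card (Paths ?m K)) * (\<Prod>j<K. 1 / Dg (?m + j))" by simp
  also have "\<dots> = (\<Prod>j<K. 2 ^ (?m + j) / Dg (?m + j))"
    using Paths_finite_card[of ?m K] by (simp add: prod.distrib[symmetric])
  finally show ?thesis .
qed

definition bnd :: "nat \<Rightarrow> real" where "bnd n = (if n = 0 then 1 else 1/4 + 1 / 2 ^ n)"

lemma bnd_step: "bnd n * (2 ^ n / Dg n) \<ge> bnd (Suc n)"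
proof (cases "n = 0")
  case True then show ?thesis by (simp add: bnd_def Dg_def)
next
  case False
  define p :: real where "p = 2 ^ n"
  have p2: "p \<ge> 2" unfolding p_def using False
    by (metis One_nat_def Suc_leI neq0_conv power_increasing power_one_right zero_less_numeral
        numeral_le_iff semiring_norm(69) one_le_numeral  order_refl)
  have "bnd n * (2 ^ n / Dg n) = (1/4 + 1/p) * (p / (p + 1))"
    using False by (simp add: bnd_def Dg_def p_def)
  moreover have "bnd (Suc n) = 1/4 + 1/(2*p)" by (simp add: bnd_def p_def)
  moreover have "(1/4 + 1/p) * (p / (p + 1)) \<ge> 1/4 + 1/(2*p)"
  proof -
  have pp: "p \<noteq> 0" "p + 1 \<noteq> 0" "p > 0" using p2 by auto
  have a: "1/4 + 1/p = (p+4)/(4*p)" using pp by (simp add: field_simps)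
  have b0: "(4*p)*(p+1) = (4*(p+1))*p" by (simp add: algebra_simps)
  have b1: "(p+4)/(4*p) * (p/(p+1)) = ((p+4)*p)/((4*(p+1))*p)" unfolding b0[symmetric] by (rule times_divide_times_eq)
  have b2: "((p+4)*p)/((4*(p+1))*p) = (p+4)/(4*(p+1))" using pp by (rule_tac mult_divide_mult_cancel_right) simp
  note b = b1 b2
  have c: "1/4 + 1/(2*p) = (p + 2) / (4 * p)" using pp by (simp add: field_simps)
  have h: "2 * (4 * p) \<le> p * (4 * p)" using mult_right_mono[OF p2, of "4*p"] p2 by simp
  have "(p + 2) * (4 * (p + 1)) \<le> (p + 4) * (4 * p)" using h p2 by (simp add: algebra_simps)
  then have "(p + 2) / (4 * p) \<le> (p + 4) / (4 * (p + 1))"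
    using pp p2 by (subst frac_le_eq) (auto simp: field_simps intro!: divide_nonpos_pos add_pos_pos mult_pos_pos)
  then show ?thesis using a b c by simp
qed
  ultimately show ?thesis by simp
qed

lemma bnd_le1: "bnd n \<le> 1"
proof (cases "n = 0")
  case False
  then have "(2::real) ^ n \<ge> 2 ^ 1" by (intro power_increasing) auto
  then have h: "1 / (2::real) ^ n \<le> 1/2" by (intro frac_le) auto
  have "bnd n = 1/4 + 1/2^n" using False by (simp add: bnd_def)
  with h show ?thesis by linarith
qed (simp add: bnd_def)

lemma bnd_ge: "bnd n \<ge> 1/4"
  by (simp add: bnd_def)

lemma prod_bnd: "(\<Prod>j<K. 2 ^ (m + j) / real (Dg (m + j))) \<ge> bnd (m + K)"
proof (induction K)
  case 0 then show ?case using bnd_le1 by simp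
next
  case (Suc K)
  have pos: "2 ^ (m + K) / real (Dg (m + K)) \<ge> 0" by simp
  have "bnd (m + Suc K) \<le> bnd (m + K) * (2 ^ (m + K) / Dg (m + K))"
    using bnd_step[of "m + K"] by simp
  also have "\<dots> \<le> (\<Prod>j<K. 2 ^ (m + j) / real (Dg (m + j))) * (2 ^ (m + K) / Dg (m + K))"
    by (rule mult_right_mono[OF Suc.IH pos])
  finally show ?case by simp
qed

lemma lab_take: "j \<le> K \<Longrightarrow> lab v0 l (take K cs) j = lab v0 l cs j"
  by (induction j) (auto simp: min_def)

lemma Ev_dec:
  assumes v0: "v0 \<in> T_vertices"
  shows "Ev v0 l (Suc K) \<subseteq> Ev v0 l K"
proof
  fix L assume "L \<in> Ev v0 l (Suc K)"
  then obtain cs where cs: "cs \<in> Paths (length v0) (Suc K)" and L: "L \<in> Cyl v0 l cs"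
    unfolding Ev_def by auto
  have tk: "take K cs \<in> Paths (length v0) K" using cs by (auto simp: Paths_def)
  have "L \<in> Cyl v0 l (take K cs)"
    unfolding mem_Cyl[OF tk v0] using L unfolding mem_Cyl[OF cs v0]
    by (auto simp: lab_take min_def)
  then show "L \<in> Ev v0 l K" using tk unfolding Ev_def by auto
qed

lemma walk_len:
  assumes v0: "v0 \<in> T_vertices" and L: "\<And>K. L \<in> Ev v0 l K"
  shows "length (basic_walk L v0 l n) = length v0 + n"
proof (cases n)
  case 0 then show ?thesis by (simp add: basic_walk_def)
next
  case (Suc k)
  obtain cs where cs: "cs \<in> Paths (length v0) (Suc k)" and Lc: "L \<in> Cyl v0 l cs"
    using L[of "Suc k"] unfolding Ev_def by auto
  have "basic_arc L v0 l k = (v0 @ take k cs, v0 @ take (Suc k) cs)"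
    using walk_Cyl[OF v0 cs Lc] by simp
  then show ?thesis using Suc cs by (simp add: basic_walk_def Paths_def)
qed

lemma escapes_of_len:
  assumes "\<And>n. length (X n) = a + n"
  shows "escapes X"
proof -
  have inj: "inj X" by (rule injI) (metis assms add_left_cancel)
  have "infinite (range X)" using inj by (rule range_inj_infinite)
  moreover have "finite {n. X n = v}" for v
  proof -
    have "{n. X n = v} \<subseteq> {length v - a}" using assms by force
    then show ?thesis by (rule finite_subset) simp
  qed
  ultimately show ?thesis by (simp add: escapes_def)
qed

lemma comp_meas: "(\<lambda>L. L u) \<in> random_labeling \<rightarrow>\<^sub>M count_space UNIV"
proof (cases "u \<in> T_vertices")
  case True
  have "(\<lambda>L. L u) \<in> random_labeling \<rightarrow>\<^sub>M ML u"
    unfolding RL_eq by (rule measurable_component_singleton[OF True])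
  moreover have "(\<lambda>x. x) \<in> ML u \<rightarrow>\<^sub>M count_space UNIV"
    by (subst measurable_cong_sets[OF sets_uniform_count_measure_count_space refl]) simp
  ultimately show ?thesis by (rule measurable_compose)
next
  case False
  have "(\<lambda>L. L u) \<in> random_labeling \<rightarrow>\<^sub>M count_space UNIV \<longleftrightarrow>
        (\<lambda>L. undefined :: nat list \<Rightarrow> nat) \<in> random_labeling \<rightarrow>\<^sub>M count_space UNIV"
    by (rule measurable_cong) (use False in \<open>auto simp: space_RL PiE_def extensional_def\<close>)
  then show ?thesis by simp
qed

lemma gen_meas: "(\<lambda>L. G (L u)) \<in> random_labeling \<rightarrow>\<^sub>M count_space UNIV"
  by (rule measurable_compose[OF comp_meas]) simp

lemma arc_meas: "(\<lambda>L. basic_arc L v0 l n) \<in> random_labeling \<rightarrow>\<^sub>M count_space UNIV"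
proof (induction n)
  case 0
  show ?case unfolding basic_arc.simps port_nbr_def
    by (rule gen_meas[where G="\<lambda>f. (v0, THE w. w \<in> T_nbrs v0 \<and> f w = l)"])
next
  case (Suc n)
  define F where "F p L = (snd p, port_nbr L (snd p) (L (fst p) (snd p) mod T_deg (snd p) + 1))" for p L
  have eq: "basic_arc L v0 l (Suc n) = F (basic_arc L v0 l n) L" for L
    by (simp add: F_def split: prod.splits)
  have "(\<lambda>L. F p L) \<in> random_labeling \<rightarrow>\<^sub>M count_space UNIV" for p
  proof -
    obtain u v where p: "p = (u, v)" by force
    have "(\<lambda>L. (v, port_nbr L v (L u v mod T_deg v + 1))) \<in> random_labeling \<rightarrow>\<^sub>M count_space UNIV"
    proof (rule measurable_compose_countable'[where f="\<lambda>i L. (v, port_nbr L v (i mod T_deg v + 1))"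
        and g="\<lambda>L. L u v" and I=UNIV])
      fix i :: nat
      show "(\<lambda>L. (v, port_nbr L v (i mod T_deg v + 1))) \<in> random_labeling \<rightarrow>\<^sub>M count_space UNIV"
        unfolding port_nbr_def
        by (rule gen_meas[where G="\<lambda>f. (v, THE w. w \<in> T_nbrs v \<and> f w = i mod T_deg v + 1)"])
      show "(\<lambda>L. L u v) \<in> random_labeling \<rightarrow>\<^sub>M count_space UNIV"
        by (rule gen_meas[where G="\<lambda>f. f v"])
    qed simp
    then show ?thesis by (simp add: F_def p)
  qed
  then have "(\<lambda>L. F (basic_arc L v0 l n) L) \<in> random_labeling \<rightarrow>\<^sub>M count_space UNIV"
    by (intro measurable_compose_countable'[where f=F and g="\<lambda>L. basic_arc L v0 l n" and I=UNIV] Suc.IH) auto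
  then show ?case unfolding eq .
qed

lemma walk_meas: "(\<lambda>L. basic_walk L v0 l n) \<in> random_labeling \<rightarrow>\<^sub>M count_space UNIV"
proof (cases "n = 0")
  case True then show ?thesis by (simp add: basic_walk_def)
next
  case False
  then have "(\<lambda>L. basic_walk L v0 l n) = (\<lambda>L. snd (basic_arc L v0 l (n - 1)))"
    by (simp add: basic_walk_def)
  moreover have "(\<lambda>L. snd (basic_arc L v0 l (n - 1))) \<in> random_labeling \<rightarrow>\<^sub>M count_space UNIV"
    by (rule measurable_compose[OF arc_meas]) simp
  ultimately show ?thesis by simp
qed

lemma pred_walk: fixes P :: "nat list \<Rightarrow> bool" shows "(\<lambda>L. P (basic_walk L v0 l n)) \<in> measurable random_labeling (count_space UNIV)"
proof -
  have "{L \<in> space random_labeling. P (basic_walk L v0 l n)} =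
        (\<lambda>L. basic_walk L v0 l n) -` {y. P y} \<inter> space random_labeling" by auto
  also have "\<dots> \<in> sets random_labeling"
    by (rule measurable_sets[OF walk_meas]) simp
  finally have "{L \<in> space random_labeling. P (basic_walk L v0 l n)} \<in> sets random_labeling" .
  then show ?thesis by (rule iffD2[OF pred_def])
qed

lemma escapes_iff: "escapes X \<longleftrightarrow>
   (\<forall>k. \<exists>n. k \<le> to_nat (X n :: nat list)) \<and> (\<forall>v. \<exists>N. \<forall>n. N \<le> n \<longrightarrow> X n \<noteq> v)"
proof -
  have inj: "inj_on to_nat (range X)" by (simp add: inj_on_def)
  have 1: "infinite (range X) \<longleftrightarrow> (\<forall>k. \<exists>n. k \<le> to_nat (X n))"
  proof
    assume inf: "infinite (range X)"
    show "\<forall>k. \<exists>n. k \<le> to_nat (X n)"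
    proof
      fix k
      show "\<exists>n. k \<le> to_nat (X n)"
      proof (rule ccontr)
        assume "\<nexists>n. k \<le> to_nat (X n)"
        then have "to_nat ` range X \<subseteq> {..<k}" by (auto simp: not_le)
        then have "finite (to_nat ` range X)" by (rule finite_subset) simp
        then have "finite (range X)" using finite_image_iff[OF inj] by simp
        then show False using inf by simp
      qed
    qed
  next
    assume unb: "\<forall>k. \<exists>n. k \<le> to_nat (X n)"
    show "infinite (range X)"
    proof
      assume "finite (range X)"
      then have "finite (to_nat ` range X)" by simp
      then obtain m where "\<forall>x\<in>to_nat ` range X. x \<le> m" using finite_nat_set_iff_bounded_le by blast
      moreover obtain n where n: "Suc m \<le> to_nat (X n)" using unb by blast
      ultimately have "to_nat (X n) \<le> m" by blast
      then show False using n by simp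
    qed
  qed
  have 2: "finite {n. X n = v} \<longleftrightarrow> (\<exists>N. \<forall>n. N \<le> n \<longrightarrow> X n \<noteq> v)" for v
  proof
    assume "finite {n. X n = v}"
    then obtain m where "\<forall>n\<in>{n. X n = v}. n \<le> m" using finite_nat_set_iff_bounded_le by blast
    then have "\<forall>n. Suc m \<le> n \<longrightarrow> X n \<noteq> v" by fastforce
    then show "\<exists>N. \<forall>n. N \<le> n \<longrightarrow> X n \<noteq> v" by blast
  next
    assume "\<exists>N. \<forall>n. N \<le> n \<longrightarrow> X n \<noteq> v"
    then obtain N where "\<forall>n. N \<le> n \<longrightarrow> X n \<noteq> v" by blast
    then have "{n. X n = v} \<subseteq> {..<N}" by (auto simp: not_le[symmetric])
    then show "finite {n. X n = v}" by (rule finite_subset) simp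
  qed
  show ?thesis unfolding escapes_def 1 2 ..
qed

lemma escape_sets:
  "{L \<in> space random_labeling. escapes (basic_walk L v0 l)} \<in> sets random_labeling"
proof -
  have "(\<lambda>L. escapes (basic_walk L v0 l)) \<in> measurable random_labeling (count_space UNIV)"
    unfolding escapes_iff
    apply (rule pred_intros_logic(3))
     apply (rule pred_intros_countable)
     apply (rule pred_intros_countable)
     apply (rule pred_walk[where P="\<lambda>y. _ \<le> to_nat y"])
    apply (rule pred_intros_countable)
    apply (rule pred_intros_countable)
    apply (rule pred_intros_countable)
    apply (rule pred_walk[where P="\<lambda>y. _ \<longrightarrow> y \<noteq> _"])
    done
  then show ?thesis by (rule iffD1[OF pred_def])
qed

theorem theorem4p8:
  assumes "v0 \<in> T_vertices" and "l \<in> {1..T_deg v0}"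
  shows "measure random_labeling
           {L \<in> space random_labeling. escapes (basic_walk L v0 l)} > 0"
proof -
  interpret P: prob_space random_labeling by (rule prob_RL)
  note v0 = assms(1) and l = assms(2)
  define Fs where "Fs = (\<Inter>K. Ev v0 l K)"
  have rng: "range (Ev v0 l) \<subseteq> sets random_labeling" using Ev_sets[OF v0] by blast
  have dec: "decseq (Ev v0 l)" by (rule decseq_SucI) (rule Ev_dec[OF v0])
  have lim: "(\<lambda>K. measure random_labeling (Ev v0 l K)) \<longlonglongrightarrow> measure random_labeling Fs"
    unfolding Fs_def by (rule P.finite_Lim_measure_decseq[OF rng dec])
  have ge: "1/4 \<le> measure random_labeling (Ev v0 l K)" for K
  proof -
    have "1/4 \<le> bnd (length v0 + K)" by (rule bnd_ge)
    also have "\<dots> \<le> (\<Prod>j<K. 2 ^ (length v0 + j) / real (Dg (length v0 + j)))" by (rule prod_bnd)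
    also have "\<dots> = measure random_labeling (Ev v0 l K)" by (rule measure_Ev[OF v0 l, symmetric])
    finally show ?thesis .
  qed
  have Fge: "1/4 \<le> measure random_labeling Fs"
    by (rule LIMSEQ_le_const[OF lim]) (use ge in blast)
  have sub: "Fs \<subseteq> {L \<in> space random_labeling. escapes (basic_walk L v0 l)}"
  proof
    fix L assume L: "L \<in> Fs"
    then have LK: "\<And>K. L \<in> Ev v0 l K" by (simp add: Fs_def)
    have "L \<in> space random_labeling"
      using LK[of 0] mem_Cyl[OF _ v0] unfolding Ev_def by blast
    moreover have "escapes (basic_walk L v0 l)"
      by (rule escapes_of_len) (rule walk_len[OF v0 LK])
    ultimately show "L \<in> {L \<in> space random_labeling. escapes (basic_walk L v0 l)}" by simp
  qed
  have "measure random_labeling Fs \<le> measure random_labeling {L \<in> space random_labeling. escapes (basic_walk L v0 l)}"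
    by (rule P.finite_measure_mono[OF sub escape_sets])
  then show ?thesis using Fge by linarith
qed

end
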